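(* In a combinatorial auction with a non-decreasing payment rule where all bidders play piecewise constant strategies, for every bidder $i$ and every valuation $v_i$ there exists a cell vertex $b_i^*$ of bidder $i$'s action space such that for every bid $b_i\in\mathbb{R}_{\ge0}^r$, $$\bar u^{\mathrm{OPT}}_i(v_i,b_i^* )\ge \bar u^{\mathrm{OPT}}_i(v_i,b_i).$$
   Context: A combinatorial auction sells goods $M$ to bidders $N$. Each bidder $i$ bids $b_i\in\mathbb{R}_{\ge0}^r$ on his $r$ bundles of interest (other bundles bid $0$) and has valuation $v_i$ with $v_i(K)\ge0$ and free disposal ($K\subseteq K'\Rightarrow v_i(K)\le v_i(K')$). An allocation $x$ gives each bidder one bundle $x_i$ (bundle of interest or $\emptyset$), pairwise disjoint; $X(b)$ is the set of allocations maximizing $\sum_i b_i(x_i)$, one chosen uniformly at random. A payment rule gives $p_i(b,x)\le b_i(x_i)$; utility is $v_i(x_i)-p_i(b,x)$. The rule is non-decreasing if for every $x$, every $i$ and all $b,b'$ with $x\in X(b)\cap X(b')$, $b_{-i}=b'_{-i}$, $b_i'\ge b_i$ coordinatewise, $p_i(b',x)\ge p_i(b,x)$. Valuations $V_j$ are independent random variables; strategies $s_j$ map valuations to bids and are piecewise constant (finitely many values), so $b_{-i}=s_{-i}(V_{-i})$ has finite support. Let $\Pi$ be the set of vectors in $\mathbb{R}^r$ whose coordinates are a permutation of $(1,\dots,r)$. For $\delta>0$, $\bar u^\delta_i(v_i,b_i,\pi)=\mathbb{E}_{b_{-i}}\big[\mathbb{E}_{x\in X(b_i+\delta\pi,b_{-i})}[v_i(x_i)-p_i(b,x)]\big]$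 with $b=(b_i,b_{-i})$ (inner expectation uniform), and $\bar u^{\mathrm{OPT}}_i(v_i,b_i)=\max_{\pi\in\Pi}\lim_{\delta\to0}\bar u^\delta_i(v_i,b_i,\pi)$. A cell of bidder $i$'s action space is a connected region $S\subseteq\mathbb{R}_{\ge0}^r$ such that for every $b_{-i}$ with positive probability there exists an allocation $x$ with $x\in X(b_i,b_{-i})$ for all $b_i\in S$; cells are convex polytopes and cell vertices are their vertices. *)

theory Defs
  imports "HOL-Analysis.Analysis" "HOL-Probability.Probability"
begin

text \<open>
Bidders form a finite type 'n (the set N), goods a finite type 'g (the set M),
and the r bundles of interest of each bidder are indexed by a finite type 'r,
so bids are vectors in real^'r (i.e. R^r).  The bundle of interest k of bidder i
is  bnd i k.  An allocation assigns to each bidder either one of his bundles of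
interest (Some k) or the empty bundle (None).
\<close>

type_synonym ('n, 'r) alloc = "'n \<Rightarrow> 'r option"
type_synonym ('n, 'r) profile = "'n \<Rightarrow> real^'r"

definition nonneg_bids :: "(real^'r::finite) set" where
  "nonneg_bids = {b. \<forall>k. 0 \<le> b $ k}"

definition alloc_bundle :: "('n \<Rightarrow> 'r \<Rightarrow> 'g set) \<Rightarrow> ('n, 'r) alloc \<Rightarrow> 'n \<Rightarrow> 'g set" where
  "alloc_bundle bnd x i = (case x i of None \<Rightarrow> {} | Some k \<Rightarrow> bnd i k)"

definition feasible :: "('n \<Rightarrow> 'r \<Rightarrow> 'g set) \<Rightarrow> ('n, 'r) alloc \<Rightarrow> bool" where
  "feasible bnd x \<longleftrightarrow> (\<forall>i j. i \<noteq> j \<longrightarrow> alloc_bundle bnd x i \<inter> alloc_bundle bnd x j = {})"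

definition bidval :: "('n, 'r::finite) profile \<Rightarrow> 'n \<Rightarrow> ('n, 'r) alloc \<Rightarrow> real" where
  "bidval b i x = (case x i of None \<Rightarrow> 0 | Some k \<Rightarrow> b i $ k)"

definition welfare :: "('n::finite, 'r::finite) profile \<Rightarrow> ('n, 'r) alloc \<Rightarrow> real" where
  "welfare b x = (\<Sum>i\<in>UNIV. bidval b i x)"

definition Xopt :: "('n::finite \<Rightarrow> 'r::finite \<Rightarrow> 'g set) \<Rightarrow> ('n, 'r) profile \<Rightarrow> ('n, 'r) alloc set" where
  "Xopt bnd b = {x. feasible bnd x \<and> (\<forall>y. feasible bnd y \<longrightarrow> welfare b y \<le> welfare b x)}"

definition valid_payment ::
  "('n::finite \<Rightarrow> 'r::finite \<Rightarrow> 'g set) \<Rightarrow> ('n \<Rightarrow> ('n, 'r) profile \<Rightarrow> ('n, 'r) alloc \<Rightarrow> real) \<Rightarrow> bool" where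
  "valid_payment bnd p \<longleftrightarrow>
     (\<forall>b x i. (\<forall>j. b j \<in> nonneg_bids) \<longrightarrow> x \<in> Xopt bnd b \<longrightarrow> p i b x \<le> bidval b i x)"

definition nondecreasing_payment ::
  "('n::finite \<Rightarrow> 'r::finite \<Rightarrow> 'g set) \<Rightarrow> ('n \<Rightarrow> ('n, 'r) profile \<Rightarrow> ('n, 'r) alloc \<Rightarrow> real) \<Rightarrow> bool" where
  "nondecreasing_payment bnd p \<longleftrightarrow>
     (\<forall>x i b b'. (\<forall>j. b j \<in> nonneg_bids) \<longrightarrow> (\<forall>j. b' j \<in> nonneg_bids) \<longrightarrow>
        x \<in> Xopt bnd b \<longrightarrow> x \<in> Xopt bnd b' \<longrightarrow>
        (\<forall>j. j \<noteq> i \<longrightarrow> b' j = b j) \<longrightarrow> (\<forall>k. b i $ k \<le> b' i $ k) \<longrightarrow>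
        p i b x \<le> p i b' x)"

definition valuation :: "('g set \<Rightarrow> real) \<Rightarrow> bool" where
  "valuation v \<longleftrightarrow> (\<forall>K. 0 \<le> v K) \<and> (\<forall>K K'. K \<subseteq> K' \<longrightarrow> v K \<le> v K')"

text \<open>
D j is the distribution of bidder j's bid s_j(V_j) (finite support, since s_j is piecewise
constant); by independence of the V_j the opponents' profile b_{-i} is distributed as the
product of the D j, j \<noteq> i (entry i of that profile is a dummy default value 0).
\<close>
definition others_dist :: "('n::finite \<Rightarrow> (real^'r::finite) pmf) \<Rightarrow> 'n \<Rightarrow> ('n, 'r) profile pmf" where
  "others_dist D i = Pi_pmf (UNIV - {i}) 0 D"

definition perm_vectors :: "(real^'r::finite) set" where
  "perm_vectors = {\<pi>. \<exists>\<sigma>. bij_betw \<sigma> (UNIV :: 'r set) {1..CARD('r)} \<and> (\<forall>k. \<pi> $ k = real (\<sigma> k))}"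

definition unif_avg :: "'a set \<Rightarrow> ('a \<Rightarrow> real) \<Rightarrow> real" where
  "unif_avg A f = (\<Sum>a\<in>A. f a) / real (card A)"

definition ubar_delta ::
  "('n::finite \<Rightarrow> 'r::finite \<Rightarrow> 'g set) \<Rightarrow> ('n \<Rightarrow> ('n, 'r) profile \<Rightarrow> ('n, 'r) alloc \<Rightarrow> real) \<Rightarrow>
   ('n \<Rightarrow> (real^'r) pmf) \<Rightarrow> 'n \<Rightarrow> ('g set \<Rightarrow> real) \<Rightarrow> real^'r \<Rightarrow> real^'r \<Rightarrow> real \<Rightarrow> real" where
  "ubar_delta bnd p D i v bi \<pi> \<delta> =
     measure_pmf.expectation (others_dist D i)
       (\<lambda>bmi. unif_avg (Xopt bnd (bmi(i := bi + \<delta> *\<^sub>R \<pi>)))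
                 (\<lambda>x. v (alloc_bundle bnd x i) - p i (bmi(i := bi)) x))"

definition ubar_opt ::
  "('n::finite \<Rightarrow> 'r::finite \<Rightarrow> 'g set) \<Rightarrow> ('n \<Rightarrow> ('n, 'r) profile \<Rightarrow> ('n, 'r) alloc \<Rightarrow> real) \<Rightarrow>
   ('n \<Rightarrow> (real^'r) pmf) \<Rightarrow> 'n \<Rightarrow> ('g set \<Rightarrow> real) \<Rightarrow> real^'r \<Rightarrow> real" where
  "ubar_opt bnd p D i v bi =
     Max ((\<lambda>\<pi>. Lim (at_right 0) (\<lambda>\<delta>. ubar_delta bnd p D i v bi \<pi> \<delta>)) ` perm_vectors)"

definition cell_property ::
  "('n::finite \<Rightarrow> 'r::finite \<Rightarrow> 'g set) \<Rightarrow> ('n \<Rightarrow> (real^'r) pmf) \<Rightarrow> 'n \<Rightarrow> (real^'r) set \<Rightarrow> bool" where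
  "cell_property bnd D i S \<longleftrightarrow>
     S \<subseteq> nonneg_bids \<and> connected S \<and>
     (\<forall>bmi \<in> set_pmf (others_dist D i). \<exists>x. \<forall>bi\<in>S. x \<in> Xopt bnd (bmi(i := bi)))"

definition is_cell ::
  "('n::finite \<Rightarrow> 'r::finite \<Rightarrow> 'g set) \<Rightarrow> ('n \<Rightarrow> (real^'r) pmf) \<Rightarrow> 'n \<Rightarrow> (real^'r) set \<Rightarrow> bool" where
  "is_cell bnd D i S \<longleftrightarrow> S \<noteq> {} \<and> cell_property bnd D i S \<and>
     (\<forall>T. S \<subseteq> T \<longrightarrow> cell_property bnd D i T \<longrightarrow> T = S)"

definition cell_vertex ::
  "('n::finite \<Rightarrow> 'r::finite \<Rightarrow> 'g set) \<Rightarrow> ('n \<Rightarrow> (real^'r) pmf) \<Rightarrow> 'n \<Rightarrow> real^'r \<Rightarrow> bool" where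
  "cell_vertex bnd D i b \<longleftrightarrow> (\<exists>S. is_cell bnd D i S \<and> b extreme_point_of S)"

end

theory Submission
  imports Defs
begin


definition piv :: "real^'r::finite \<Rightarrow> 'r option \<Rightarrow> real" where
  "piv b ob = (case ob of None \<Rightarrow> 0 | Some k \<Rightarrow> b $ k)"

definition rest :: "('n::finite, 'r::finite) profile \<Rightarrow> 'n \<Rightarrow> ('n, 'r) alloc \<Rightarrow> real" where
  "rest bmi i x = (\<Sum>j\<in>UNIV-{i}. bidval bmi j x)"

lemma welfare_upd: "welfare (bmi(i:=b)) x = piv b (x i) + rest bmi i x"
proof -
  have "welfare (bmi(i:=b)) x = bidval (bmi(i:=b)) i x + (\<Sum>j\<in>UNIV-{i}. bidval (bmi(i:=b)) j x)"
    unfolding welfare_def by (simp add: sum.remove[of UNIV i])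
  also have "(\<Sum>j\<in>UNIV-{i}. bidval (bmi(i:=b)) j x) = rest bmi i x"
    unfolding rest_def by (intro sum.cong) (auto simp: bidval_def split: option.split)
  also have "bidval (bmi(i:=b)) i x = piv b (x i)" by (simp add: bidval_def piv_def split: option.split)
  finally show ?thesis .
qed

lemma Xopt_upd: "x \<in> Xopt bnd (bmi(i:=b)) \<longleftrightarrow> feasible bnd x \<and>
   (\<forall>y. feasible bnd y \<longrightarrow> piv b (y i) + rest bmi i y \<le> piv b (x i) + rest bmi i x)"
  by (simp add: Xopt_def welfare_upd)

lemma piv_add: "piv (a + c) ob = piv a ob + piv c ob"
  by (cases ob) (auto simp: piv_def)
lemma piv_scale: "piv (t *\<^sub>R a) ob = t * piv a ob"
  by (cases ob) (auto simp: piv_def)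
lemma piv_diff: "piv (a - c) ob = piv a ob - piv c ob"
  by (cases ob) (auto simp: piv_def)
lemma piv_mono: "(\<And>k. a $ k \<le> c $ k) \<Longrightarrow> piv a ob \<le> piv c ob"
  by (cases ob) (auto simp: piv_def)

definition Yset where
  "Yset bnd bmi i b \<pi> = {x \<in> Xopt bnd (bmi(i:=b)). \<forall>y\<in>Xopt bnd (bmi(i:=b)). piv \<pi> (y i) \<le> piv \<pi> (x i)}"

lemma argmax_perturb:
  fixes f g :: "'a \<Rightarrow> real"
  assumes "finite F"
  shows "eventually (\<lambda>\<delta>. {x\<in>F. \<forall>y\<in>F. f y + \<delta>*g y \<le> f x + \<delta>*g x} =
     {x\<in>{x\<in>F. \<forall>y\<in>F. f y \<le> f x}. \<forall>y\<in>{x\<in>F. \<forall>y\<in>F. f y \<le> f x}. g y \<le> g x}) (at_right 0)"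
proof -
  have pair: "eventually (\<lambda>\<delta>. f y < f x \<longrightarrow> f y + \<delta>*g y < f x + \<delta>*g x) (at_right 0)" for x y
  proof (cases "f y < f x")
    case True
    have "((\<lambda>\<delta>::real. \<delta> * (g y - g x)) \<longlongrightarrow> 0 * (g y - g x)) (at_right 0)"
      by (intro tendsto_intros)
    then have "eventually (\<lambda>\<delta>. \<delta> * (g y - g x) < f x - f y) (at_right 0)"
      using True by (intro order_tendstoD(2)) auto
    then show ?thesis by eventually_elim (auto simp: algebra_simps)
  qed simp
  have ev: "eventually (\<lambda>\<delta>. 0 < \<delta> \<and> (\<forall>x\<in>F. \<forall>y\<in>F. f y < f x \<longrightarrow> f y + \<delta>*g y < f x + \<delta>*g x)) (at_right 0)"
    using assms pair
    by (intro eventually_conj eventually_at_right_less eventually_ball_finite ballI) auto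
  show ?thesis
    using ev
  proof eventually_elim
    case (elim \<delta>)
    then have d: "0 < \<delta>" and Q: "\<And>x y. x\<in>F \<Longrightarrow> y\<in>F \<Longrightarrow> f y < f x \<Longrightarrow> f y + \<delta>*g y < f x + \<delta>*g x"
      by auto
    show ?case
    proof (intro set_eqI iffI)
      fix x assume x: "x \<in> {x\<in>F. \<forall>y\<in>F. f y + \<delta>*g y \<le> f x + \<delta>*g x}"
      have xA: "\<forall>y\<in>F. f y \<le> f x"
      proof
        fix y assume y: "y \<in> F"
        show "f y \<le> f x"
        proof (rule ccontr)
          assume "\<not> f y \<le> f x"
          then have "f x + \<delta>*g x < f y + \<delta>*g y" using Q[OF y] x by auto
          then show False using x y by force
        qed
      qed
      have "g y \<le> g x" if y: "y \<in> F" "\<forall>z\<in>F. f z \<le> f y" for y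
      proof -
        have "f y = f x" using xA y x by force
        moreover have "f y + \<delta>*g y \<le> f x + \<delta>*g x" using x y by auto
        ultimately have "\<delta> * g y \<le> \<delta> * g x" by simp
        then show ?thesis using d by simp
      qed
      then show "x \<in> {x\<in>{x\<in>F. \<forall>y\<in>F. f y \<le> f x}. \<forall>y\<in>{x\<in>F. \<forall>y\<in>F. f y \<le> f x}. g y \<le> g x}"
        using x xA by auto
    next
      fix x assume x: "x \<in> {x\<in>{x\<in>F. \<forall>y\<in>F. f y \<le> f x}. \<forall>y\<in>{x\<in>F. \<forall>y\<in>F. f y \<le> f x}. g y \<le> g x}"
      have "f y + \<delta>*g y \<le> f x + \<delta>*g x" if y: "y \<in> F" for y
      proof (cases "f y < f x")
        case True then show ?thesis using Q[OF _ y] x by force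
      next
        case False
        then have "f y = f x" using x y by force
        then have "\<forall>z\<in>F. f z \<le> f y" using x by auto
        then have "g y \<le> g x" using x y by auto
        then show ?thesis using \<open>f y = f x\<close> d by simp
      qed
      then show "x \<in> {x\<in>F. \<forall>y\<in>F. f y + \<delta>*g y \<le> f x + \<delta>*g x}" using x by auto
    qed
  qed
qed

lemma finite_feasible: "finite {x :: ('n::finite,'r::finite) alloc. feasible bnd x}"
  by simp

lemma Xopt_eventually:
  fixes bnd :: "'n::finite \<Rightarrow> 'r::finite \<Rightarrow> 'g set"
  shows "eventually (\<lambda>\<delta>. Xopt bnd (bmi(i := bi + \<delta> *\<^sub>R \<pi>)) = Yset bnd bmi i bi \<pi>) (at_right 0)"
proof -
  let ?F = "{x :: ('n,'r) alloc. feasible bnd x}"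
  let ?f = "\<lambda>x. piv bi (x i) + rest bmi i x"
  let ?g = "\<lambda>x. piv \<pi> (x i)"
  have 1: "Xopt bnd (bmi(i := bi + \<delta> *\<^sub>R \<pi>)) = {x\<in>?F. \<forall>y\<in>?F. ?f y + \<delta>*?g y \<le> ?f x + \<delta>*?g x}" for \<delta>
    by (auto simp: Xopt_upd piv_add piv_scale algebra_simps)
  have 2: "Yset bnd bmi i bi \<pi> = {x\<in>{x\<in>?F. \<forall>y\<in>?F. ?f y \<le> ?f x}. \<forall>y\<in>{x\<in>?F. \<forall>y\<in>?F. ?f y \<le> ?f x}. ?g y \<le> ?g x}"
    by (auto simp: Yset_def Xopt_upd)
  show ?thesis unfolding 1 2 by (rule argmax_perturb) simp
qed


lemma supp_finite:
  assumes "\<And>j. finite (set_pmf (D j))"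
  shows "finite (set_pmf (others_dist D (i::'n::finite)))"
proof -
  have "set_pmf (others_dist D i) \<subseteq> PiE_dflt (UNIV - {i}) 0 (set_pmf \<circ> D)"
    unfolding others_dist_def by (rule set_Pi_pmf_subset') simp
  moreover have "finite (PiE_dflt (UNIV - {i}) 0 (set_pmf \<circ> D))"
    using assms by (intro finite_PiE_dflt) auto
  ultimately show ?thesis by (rule finite_subset)
qed

lemma supp_mem:
  assumes "bmi \<in> set_pmf (others_dist D (i::'n::finite))" "j \<noteq> i"
  shows "bmi j \<in> set_pmf (D j)"
proof -
  have "set_pmf (others_dist D i) \<subseteq> PiE_dflt (UNIV - {i}) 0 (set_pmf \<circ> D)"
    unfolding others_dist_def by (rule set_Pi_pmf_subset') simp
  then show ?thesis using assms by (auto simp: PiE_dflt_def)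
qed

lemma expectation_cong_pmf:
  fixes f g :: "'a \<Rightarrow> real"
  shows "(\<And>x. x \<in> set_pmf M \<Longrightarrow> f x = g x) \<Longrightarrow> measure_pmf.expectation M f = measure_pmf.expectation M g"
  by (rule integral_cong_AE) (auto simp: AE_measure_pmf_iff)

lemma expectation_mono_pmf:
  fixes f g :: "'a \<Rightarrow> real"
  shows "finite (set_pmf M) \<Longrightarrow> (\<And>x. x \<in> set_pmf M \<Longrightarrow> f x \<le> g x) \<Longrightarrow> measure_pmf.expectation M f \<le> measure_pmf.expectation M g"
  by (rule integral_mono_AE) (auto simp: AE_measure_pmf_iff intro: integrable_measure_pmf_finite)

lemma Lim_ubar:
  fixes bnd :: "'n::finite \<Rightarrow> 'r::finite \<Rightarrow> 'g set"
  assumes fin: "finite (set_pmf (others_dist D i))"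
  shows "Lim (at_right 0) (\<lambda>\<delta>. ubar_delta bnd p D i v bi \<pi> \<delta>) =
    measure_pmf.expectation (others_dist D i)
      (\<lambda>bmi. unif_avg (Yset bnd bmi i bi \<pi>) (\<lambda>x. v (alloc_bundle bnd x i) - p i (bmi(i:=bi)) x))"
proof -
  have "eventually (\<lambda>\<delta>. \<forall>bmi\<in>set_pmf (others_dist D i). Xopt bnd (bmi(i := bi + \<delta> *\<^sub>R \<pi>)) = Yset bnd bmi i bi \<pi>) (at_right 0)"
    using fin by (intro eventually_ball_finite) (auto intro: Xopt_eventually)
  then have "eventually (\<lambda>\<delta>. ubar_delta bnd p D i v bi \<pi> \<delta> = measure_pmf.expectation (others_dist D i)
      (\<lambda>bmi. unif_avg (Yset bnd bmi i bi \<pi>) (\<lambda>x. v (alloc_bundle bnd x i) - p i (bmi(i:=bi)) x))) (at_right 0)"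
    by eventually_elim (auto simp: ubar_delta_def intro!: expectation_cong_pmf)
  then have "((\<lambda>\<delta>. ubar_delta bnd p D i v bi \<pi> \<delta>) \<longlongrightarrow> measure_pmf.expectation (others_dist D i)
      (\<lambda>bmi. unif_avg (Yset bnd bmi i bi \<pi>) (\<lambda>x. v (alloc_bundle bnd x i) - p i (bmi(i:=bi)) x))) (at_right 0)"
    by (rule tendsto_eventually)
  then show ?thesis by (intro tendsto_Lim) auto
qed

lemma perm_vectors_finite: "finite (perm_vectors :: (real^'r::finite) set)"
proof -
  have "perm_vectors \<subseteq> (\<lambda>f. vec_lambda f) ` (PiE (UNIV::'r set) (\<lambda>_. real ` {1..CARD('r)}))"
  proof
    fix \<pi> :: "real^'r" assume "\<pi> \<in> perm_vectors"
    then obtain \<sigma> where s: "bij_betw \<sigma> (UNIV :: 'r set) {1..CARD('r)}" "\<forall>k. \<pi> $ k = real (\<sigma> k)"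
      by (auto simp: perm_vectors_def)
    have "(\<lambda>k. \<pi> $ k) \<in> PiE (UNIV::'r set) (\<lambda>_. real ` {1..CARD('r)})"
      using s bij_betw_apply[OF s(1)] by (auto simp: PiE_UNIV_domain)
    moreover have "\<pi> = vec_lambda (\<lambda>k. \<pi> $ k)" by simp
    ultimately show "\<pi> \<in> (\<lambda>f. vec_lambda f) ` (PiE (UNIV::'r set) (\<lambda>_. real ` {1..CARD('r)}))"
      by blast
  qed
  moreover have "finite ((\<lambda>f. vec_lambda f) ` (PiE (UNIV::'r set) (\<lambda>_. real ` {1..CARD('r)})))"
    by (intro finite_imageI finite_PiE) auto
  ultimately show ?thesis by (rule finite_subset)
qed

lemma perm_vectors_nonempty: "\<exists>\<pi>. \<pi> \<in> (perm_vectors :: (real^'r::finite) set)"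
proof -
  obtain \<sigma> where "bij_betw \<sigma> (UNIV :: 'r set) {1..CARD('r)}"
    using finite_same_card_bij[of "UNIV :: 'r set" "{1..CARD('r)}"] by auto
  then have "(\<chi> k. real (\<sigma> k)) \<in> (perm_vectors :: (real^'r::finite) set)"
    by (auto simp: perm_vectors_def)
  then show ?thesis by blast
qed

lemma perm_pos: "\<pi> \<in> perm_vectors \<Longrightarrow> 1 \<le> \<pi> $ k"
  by (auto simp: perm_vectors_def dest!: bij_betw_apply[where a=k])

lemma perm_inj: "\<pi> \<in> perm_vectors \<Longrightarrow> \<pi> $ k = \<pi> $ l \<Longrightarrow> k = l"
  by (auto simp: perm_vectors_def bij_betw_def inj_on_def)

lemma exists_perm_order:
  fixes d \<pi> :: "real^'r::finite"
  assumes pi: "\<pi> \<in> perm_vectors"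
  shows "\<exists>\<pi>'\<in>perm_vectors. \<forall>k l. (d$l < d$k \<or> (d$l = d$k \<and> \<pi>$l < \<pi>$k)) \<longrightarrow> \<pi>'$l < \<pi>'$k"
proof -
  define lt where "lt l k \<longleftrightarrow> (d$l < d$k \<or> (d$l = d$k \<and> \<pi>$l < \<pi>$k))" for l k
  define c where "c k = card {m. lt m k}" for k
  define \<sigma> where "\<sigma> k = Suc (c k)" for k
  have trans: "lt a b \<Longrightarrow> lt b e \<Longrightarrow> lt a e" for a b e
    unfolding lt_def by auto
  have irr: "\<not> lt a a" for a unfolding lt_def by auto
  have total: "k \<noteq> l \<Longrightarrow> lt k l \<or> lt l k" for k l
    using perm_inj[OF pi, of k l] unfolding lt_def by force
  have mono: "lt l k \<Longrightarrow> c l < c k" for k l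
  proof -
    assume lk: "lt l k"
    have "{m. lt m l} \<subset> {m. lt m k}"
      using lk trans irr by blast
    then show ?thesis unfolding c_def by (intro psubset_card_mono) auto
  qed
  have inj: "inj \<sigma>"
  proof (rule injI)
    fix k l assume "\<sigma> k = \<sigma> l"
    then have "c k = c l" by (simp add: \<sigma>_def)
    then show "k = l" using total mono by force
  qed
  have rng: "\<sigma> k \<in> {1..CARD('r)}" for k
  proof -
    have "{m. lt m k} \<subseteq> UNIV - {k}" using irr by auto
    then have "c k \<le> card (UNIV - {k} :: 'r set)" unfolding c_def by (intro card_mono) auto
    also have "\<dots> = CARD('r) - 1" by (simp add: card_Diff_singleton)
    finally have "c k \<le> CARD('r) - 1" .
    moreover have "0 < CARD('r)" by simp
    ultimately have "Suc (c k) \<le> CARD('r)" by linarith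
    then show ?thesis unfolding \<sigma>_def by auto
  qed
  have "bij_betw \<sigma> (UNIV :: 'r set) {1..CARD('r)}"
  proof -
    have "\<sigma> ` UNIV \<subseteq> {1..CARD('r)}" using rng by auto
    moreover have "card (\<sigma> ` UNIV) = card {1..CARD('r)}"
      using inj by (simp add: card_image)
    ultimately have "\<sigma> ` UNIV = {1..CARD('r)}" by (intro card_subset_eq) auto
    then show ?thesis using inj by (simp add: bij_betw_def)
  qed
  then have "(\<chi> k. real (\<sigma> k)) \<in> (perm_vectors :: (real^'r::finite) set)"
    by (auto simp: perm_vectors_def)
  moreover have "\<forall>k l. lt l k \<longrightarrow> (\<chi> k. real (\<sigma> k)) $ l < (\<chi> k. real (\<sigma> k)) $ k"
    using mono by (auto simp: \<sigma>_def)
  ultimately show ?thesis unfolding lt_def by blast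
qed




lemma ex_argmax:
  fixes f :: "'a \<Rightarrow> real"
  assumes "finite A" "A \<noteq> {}"
  shows "\<exists>x\<in>A. \<forall>y\<in>A. f y \<le> f x"
proof -
  have "Max (f ` A) \<in> f ` A" using assms by (intro Max_in) auto
  then obtain x where x: "x \<in> A" "f x = Max (f ` A)" by auto
  have "\<forall>y\<in>A. f y \<le> f x" using assms x by auto
  then show ?thesis using x by blast
qed

lemma Xopt_nonempty:
  fixes bnd :: "'n::finite \<Rightarrow> 'r::finite \<Rightarrow> 'g set"
  shows "Xopt bnd b \<noteq> {}"
proof -
  have "(\<lambda>_. None) \<in> {x :: ('n,'r) alloc. feasible bnd x}"
    by (simp add: feasible_def alloc_bundle_def)
  then obtain x where "x \<in> {x :: ('n,'r) alloc. feasible bnd x}"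
      "\<forall>y\<in>{x :: ('n,'r) alloc. feasible bnd x}. welfare b y \<le> welfare b x"
    using ex_argmax[of "{x :: ('n,'r) alloc. feasible bnd x}" "welfare b"] by auto
  then have "x \<in> Xopt bnd b" by (auto simp: Xopt_def)
  then show ?thesis by auto
qed

lemma Yset_nonempty:
  fixes bnd :: "'n::finite \<Rightarrow> 'r::finite \<Rightarrow> 'g set"
  shows "Yset bnd bmi i b \<pi> \<noteq> {}"
proof -
  obtain x where "x \<in> Xopt bnd (bmi(i:=b))"
      "\<forall>y\<in>Xopt bnd (bmi(i:=b)). piv \<pi> (y i) \<le> piv \<pi> (x i)"
    using ex_argmax[of "Xopt bnd (bmi(i:=b))" "\<lambda>x. piv \<pi> (x i)"] Xopt_nonempty[of bnd "bmi(i:=b)"]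
    by auto
  then show ?thesis by (auto simp: Yset_def)
qed

definition pvec :: "'r::finite option \<Rightarrow> real^'r" where
  "pvec ob = (case ob of None \<Rightarrow> 0 | Some k \<Rightarrow> axis k 1)"

lemma piv_inner: "piv b ob = pvec ob \<bullet> b"
  by (cases ob) (auto simp: piv_def pvec_def inner_axis')

lemma polyhedron_Xopt:
  fixes bnd :: "'n::finite \<Rightarrow> 'r::finite \<Rightarrow> 'g set"
  shows "polyhedron {b. y \<in> Xopt bnd (bmi(i:=b))}"
proof (cases "feasible bnd y")
  case True
  have "{b. y \<in> Xopt bnd (bmi(i:=b))} =
     \<Inter>((\<lambda>z. {b. (pvec (z i) - pvec (y i)) \<bullet> b \<le> rest bmi i y - rest bmi i z}) ` {z. feasible bnd z})"
    using True by (auto simp: Xopt_upd piv_inner inner_diff_left algebra_simps)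
  also have "polyhedron \<dots>"
    by (intro polyhedron_Inter finite_imageI) (auto intro: polyhedron_halfspace_le)
  finally show ?thesis .
next
  case False
  then have "{b. y \<in> Xopt bnd (bmi(i:=b))} = {}" by (auto simp: Xopt_def)
  then show ?thesis by simp
qed

lemma nonneg_Inter: "nonneg_bids = \<Inter>((\<lambda>k. {b. (- axis k 1) \<bullet> b \<le> (0::real)}) ` (UNIV :: 'r::finite set))"
  by (auto simp: nonneg_bids_def inner_axis')

lemma polyhedron_nonneg: "polyhedron (nonneg_bids :: (real^'r::finite) set)"
  unfolding nonneg_Inter
  by (intro polyhedron_Inter finite_imageI) (auto intro: polyhedron_halfspace_le polyhedron_halfspace_ge)

lemma convex_Xopt:
  fixes bnd :: "'n::finite \<Rightarrow> 'r::finite \<Rightarrow> 'g set"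
  shows "convex {b. y \<in> Xopt bnd (bmi(i:=b))}"
  using polyhedron_Xopt by (rule polyhedron_imp_convex)

definition tset where
  "tset bnd D i ch = {b \<in> nonneg_bids. \<forall>bmi\<in>set_pmf (others_dist D i). ch bmi \<in> Xopt bnd (bmi(i:=b))}"

lemma tset_eq:
  "tset bnd D i ch = nonneg_bids \<inter> (\<Inter>bmi\<in>set_pmf (others_dist D i). {b. ch bmi \<in> Xopt bnd (bmi(i:=b))})"
  by (auto simp: tset_def)

lemma polyhedron_tset:
  fixes bnd :: "'n::finite \<Rightarrow> 'r::finite \<Rightarrow> 'g set"
  assumes "finite (set_pmf (others_dist D i))"
  shows "polyhedron (tset bnd D i ch)"
  unfolding tset_eq using assms
  by (intro polyhedron_Int polyhedron_nonneg polyhedron_Inter finite_imageI) (auto intro: polyhedron_Xopt)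

lemma convex_tset:
  fixes bnd :: "'n::finite \<Rightarrow> 'r::finite \<Rightarrow> 'g set"
  shows "convex (tset bnd D i ch)"
  unfolding tset_eq
  by (intro convex_Int convex_INT polyhedron_imp_convex[OF polyhedron_nonneg] convex_Xopt)

lemma cell_prop_tset:
  fixes bnd :: "'n::finite \<Rightarrow> 'r::finite \<Rightarrow> 'g set"
  shows "cell_property bnd D i (tset bnd D i ch)"
  unfolding cell_property_def
  by (auto simp: convex_connected[OF convex_tset]) (auto simp: tset_def)

lemma subset_tset:
  fixes bnd :: "'n::finite \<Rightarrow> 'r::finite \<Rightarrow> 'g set"
  assumes "cell_property bnd D i C"
  shows "\<exists>ch\<in>PiE (set_pmf (others_dist D i)) (\<lambda>_. UNIV). C \<subseteq> tset bnd D i ch"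
proof -
  define ch where "ch = restrict (\<lambda>bmi. SOME x. \<forall>b\<in>C. x \<in> Xopt bnd (bmi(i:=b))) (set_pmf (others_dist D i))"
  have "ch \<in> PiE (set_pmf (others_dist D i)) (\<lambda>_. UNIV)" by (simp add: ch_def)
  moreover have "C \<subseteq> tset bnd D i ch"
  proof
    fix b assume b: "b \<in> C"
    have "ch bmi \<in> Xopt bnd (bmi(i:=b))" if "bmi \<in> set_pmf (others_dist D i)" for bmi
    proof -
      have "\<exists>x. \<forall>b\<in>C. x \<in> Xopt bnd (bmi(i:=b))" using assms that by (auto simp: cell_property_def)
      then have "\<forall>b\<in>C. (SOME x. \<forall>b\<in>C. x \<in> Xopt bnd (bmi(i:=b))) \<in> Xopt bnd (bmi(i:=b))"
        by (rule someI_ex)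
      then show ?thesis using b that by (simp add: ch_def)
    qed
    moreover have "b \<in> nonneg_bids" using assms b by (auto simp: cell_property_def)
    ultimately show "b \<in> tset bnd D i ch" by (auto simp: tset_def)
  qed
  ultimately show ?thesis by blast
qed

lemma cell_is_tset:
  fixes bnd :: "'n::finite \<Rightarrow> 'r::finite \<Rightarrow> 'g set"
  assumes "is_cell bnd D i C"
  shows "\<exists>ch\<in>PiE (set_pmf (others_dist D i)) (\<lambda>_. UNIV). C = tset bnd D i ch"
proof -
  obtain ch where "ch\<in>PiE (set_pmf (others_dist D i)) (\<lambda>_. UNIV)" "C \<subseteq> tset bnd D i ch"
    using subset_tset[of bnd D i C] assms by (auto simp: is_cell_def)
  moreover then have "tset bnd D i ch = C" using assms cell_prop_tset[of bnd D i ch]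
    by (auto simp: is_cell_def)
  ultimately show ?thesis by auto
qed

lemma cell_exists:
  fixes bnd :: "'n::finite \<Rightarrow> 'r::finite \<Rightarrow> 'g set"
  assumes fin: "finite (set_pmf (others_dist D i))" and b0: "b0 \<in> nonneg_bids"
  shows "\<exists>ch. is_cell bnd D i (tset bnd D i ch) \<and> b0 \<in> tset bnd D i ch"
proof -
  define Fam where "Fam = tset bnd D i ` {ch\<in>PiE (set_pmf (others_dist D i)) (\<lambda>_. UNIV). b0 \<in> tset bnd D i ch}"
  have "finite Fam" unfolding Fam_def using fin
    by (intro finite_imageI finite_subset[OF _ finite_PiE[of "set_pmf (others_dist D i)" "\<lambda>_. UNIV :: ('n,'r) alloc set"]]) auto
  moreover have "Fam \<noteq> {}"
  proof -
    have "cell_property bnd D i {b0}"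
      using b0 Xopt_nonempty[of bnd] by (auto simp: cell_property_def)
    then obtain ch where "ch\<in>PiE (set_pmf (others_dist D i)) (\<lambda>_. UNIV)" "{b0} \<subseteq> tset bnd D i ch"
      using subset_tset by blast
    then show ?thesis unfolding Fam_def by auto
  qed
  ultimately obtain m where m: "m \<in> Fam" "\<forall>b\<in>Fam. m \<subseteq> b \<longrightarrow> m = b"
    using finite_has_maximal[of Fam] by auto
  then obtain ch where ch: "m = tset bnd D i ch" "b0 \<in> tset bnd D i ch" by (auto simp: Fam_def)
  have "is_cell bnd D i m"
    unfolding is_cell_def
  proof (intro conjI allI impI)
    show "m \<noteq> {}" using ch by auto
    show "cell_property bnd D i m" using ch cell_prop_tset by auto
    fix T assume T: "m \<subseteq> T" "cell_property bnd D i T"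
    obtain ch' where ch': "ch'\<in>PiE (set_pmf (others_dist D i)) (\<lambda>_. UNIV)" "T \<subseteq> tset bnd D i ch'"
      using subset_tset[OF T(2)] by blast
    have "b0 \<in> tset bnd D i ch'" using T(1) ch'(2) ch by blast
    then have F: "tset bnd D i ch' \<in> Fam" unfolding Fam_def using ch'(1) by blast
    have "m \<subseteq> tset bnd D i ch'" using T(1) ch'(2) by blast
    then have "m = tset bnd D i ch'" using m(2) F by blast
    then show "T = m" using T(1) ch'(2) by blast
  qed
  then show ?thesis using ch by auto
qed

lemma vertices_finite:
  fixes bnd :: "'n::finite \<Rightarrow> 'r::finite \<Rightarrow> 'g set"
  assumes fin: "finite (set_pmf (others_dist D i))"
  shows "finite {b. cell_vertex bnd D i b}"
proof -
  have "{b. cell_vertex bnd D i b} \<subseteq>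
     (\<Union>ch\<in>PiE (set_pmf (others_dist D i)) (\<lambda>_. UNIV :: ('n,'r) alloc set). {v. v extreme_point_of tset bnd D i ch})"
    unfolding cell_vertex_def using cell_is_tset by blast
  moreover have "finite (\<Union>ch\<in>PiE (set_pmf (others_dist D i)) (\<lambda>_. UNIV :: ('n,'r) alloc set). {v. v extreme_point_of tset bnd D i ch})"
    using fin by (intro finite_UN_I finite_PiE finite_polyhedron_extreme_points polyhedron_tset) auto
  ultimately show ?thesis by (rule finite_subset)
qed



lemma vmin_Xopt:
  fixes a c :: "real^'r::finite"
  assumes "y \<in> Xopt bnd (bmi(i:=a))" "y \<in> Xopt bnd (bmi(i:=c))"
  shows "y \<in> Xopt bnd (bmi(i:= (\<chi> k. min (a$k) (c$k))))"
proof -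
  let ?m = "(\<chi> k. min (a$k) (c$k)) :: real^'r"
  have eq: "piv ?m (y i) = piv a (y i) \<or> piv ?m (y i) = piv c (y i)"
    by (cases "y i") (auto simp: piv_def min_def)
  have lea: "piv ?m ob \<le> piv a ob" for ob by (rule piv_mono) auto
  have lec: "piv ?m ob \<le> piv c ob" for ob by (rule piv_mono) auto
  have "piv ?m (z i) + rest bmi i z \<le> piv ?m (y i) + rest bmi i y" if z: "feasible bnd z" for z
  proof -
    have A: "piv a (z i) + rest bmi i z \<le> piv a (y i) + rest bmi i y"
      using assms(1) z by (auto simp: Xopt_upd)
    have C: "piv c (z i) + rest bmi i z \<le> piv c (y i) + rest bmi i y"
      using assms(2) z by (auto simp: Xopt_upd)
    show ?thesis using eq A C lea[of "z i"] lec[of "z i"] by linarith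
  qed
  then show ?thesis using assms(1) by (auto simp: Xopt_upd)
qed

lemma face_step:
  assumes xa: "x \<in> Xopt bnd (bmi(i:=a))" and xc: "x \<in> Xopt bnd (bmi(i:=c))"
    and xe: "x \<in> Xopt bnd (bmi(i:=e))" and ye: "y \<in> Xopt bnd (bmi(i:=e))"
    and e: "e = (1 - u) *\<^sub>R a + u *\<^sub>R c" and u: "0 < u" "u < 1"
  shows "y \<in> Xopt bnd (bmi(i:=a))"
proof -
  define h where "h b = piv b (y i) - piv b (x i) + (rest bmi i y - rest bmi i x)" for b
  have yf: "feasible bnd y" using ye by (simp add: Xopt_def)
  have xf: "feasible bnd x" using xe by (simp add: Xopt_def)
  have ha: "h a \<le> 0" using xa yf by (auto simp: Xopt_upd h_def)
  have hc: "h c \<le> 0" using xc yf by (auto simp: Xopt_upd h_def)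
  have he: "h e \<ge> 0" using ye xf by (auto simp: Xopt_upd h_def)
  have pe: "piv e ob = (1-u) * piv a ob + u * piv c ob" for ob
    unfolding e by (simp add: piv_add piv_scale)
  have "h e = (1 - u) * h a + u * h c"
    unfolding h_def pe by (simp add: algebra_simps)
  moreover have "(1 - u) * h a \<le> 0" using ha u by (simp add: mult_nonneg_nonpos)
  moreover have "u * h c \<le> 0" using hc u by (simp add: mult_nonneg_nonpos)
  ultimately have "(1 - u) * h a = 0" using he by linarith
  then have ha0: "h a = 0" using u by simp
  show ?thesis
    using xa yf ha0 by (auto simp: Xopt_upd h_def)
qed

lemma Yset_transfer:
  fixes bnd :: "'n::finite \<Rightarrow> 'r::finite \<Rightarrow> 'g set"
  assumes Ysub: "Yset bnd bmi i bi \<pi>0 \<subseteq> Xopt bnd (bmi(i:=bs))"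
    and pi0: "\<pi>0 \<in> perm_vectors" and pi1: "\<pi>1 \<in> perm_vectors"
    and le: "\<forall>k. bs$k \<le> bi$k"
    and ord: "\<forall>k l. ((bi-bs)$l < (bi-bs)$k \<or> ((bi-bs)$l = (bi-bs)$k \<and> \<pi>0$l < \<pi>0$k)) \<longrightarrow> \<pi>1$l < \<pi>1$k"
  shows "Yset bnd bmi i bs \<pi>1 = Yset bnd bmi i bi \<pi>0"
proof -
  let ?R = "rest bmi i"
  have toXi: "y \<in> Xopt bnd (bmi(i:=bi))"
    if x: "x \<in> Xopt bnd (bmi(i:=bi))" and yf: "feasible bnd y"
      and eq: "piv bi (y i) + ?R y = piv bi (x i) + ?R x" for x y
    using x yf eq by (auto simp: Xopt_upd)
  have key: "piv \<pi>1 (y i) < piv \<pi>1 (x i) \<or> y i = x i"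
    if x: "x \<in> Yset bnd bmi i bi \<pi>0" and y: "y \<in> Xopt bnd (bmi(i:=bs))" for x y
  proof -
    have xb: "x \<in> Xopt bnd (bmi(i:=bs))" using x Ysub by auto
    have xi: "x \<in> Xopt bnd (bmi(i:=bi))" and xmax: "\<forall>w\<in>Xopt bnd (bmi(i:=bi)). piv \<pi>0 (w i) \<le> piv \<pi>0 (x i)"
      using x by (auto simp: Yset_def)
    have yf: "feasible bnd y" and xf: "feasible bnd x" using y xb by (auto simp: Xopt_def)
    have a1: "piv bs (y i) + ?R y \<le> piv bs (x i) + ?R x" using xb yf by (simp add: Xopt_upd)
    have a2: "piv bs (x i) + ?R x \<le> piv bs (y i) + ?R y" using y xf by (simp add: Xopt_upd)
    have eqbs: "piv bs (y i) + ?R y = piv bs (x i) + ?R x" using a1 a2 by linarith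
    have lebi: "piv bi (y i) + ?R y \<le> piv bi (x i) + ?R x"
      using xi yf by (auto simp: Xopt_upd)
    show ?thesis
    proof (cases "x i")
      case None
      show ?thesis
      proof (cases "y i")
        case None then show ?thesis using \<open>x i = None\<close> by simp
      next
        case (Some l)
        have "bs$l \<le> bi$l" using le by auto
        then have "piv bi (y i) + ?R y = piv bi (x i) + ?R x"
          using eqbs lebi None Some by (simp add: piv_def)
        then have "y \<in> Xopt bnd (bmi(i:=bi))" using toXi xi yf by blast
        then have "\<pi>0 $ l \<le> 0" using xmax None Some by (force simp: piv_def)
        then show ?thesis using perm_pos[OF pi0, of l] by simp
      qed
    next
      case (Some k)
      show ?thesis
      proof (cases "y i")
        case None then show ?thesis using Some perm_pos[OF pi1, of k] by (simp add: piv_def)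
      next
        case (Some l)
        show ?thesis
        proof (cases "l = k")
          case True then show ?thesis using Some \<open>x i = Some k\<close> by simp
        next
          case lk: False
          have dd: "(bi-bs)$l \<le> (bi-bs)$k"
            using eqbs lebi Some \<open>x i = Some k\<close> by (simp add: piv_def)
          show ?thesis
          proof (cases "(bi-bs)$l < (bi-bs)$k")
            case True
            then show ?thesis using ord Some \<open>x i = Some k\<close> by (simp add: piv_def)
          next
            case False
            then have deq: "(bi-bs)$l = (bi-bs)$k" using dd by simp
            then have "piv bi (y i) + ?R y = piv bi (x i) + ?R x"
              using eqbs lebi Some \<open>x i = Some k\<close> by (simp add: piv_def)
            then have "y \<in> Xopt bnd (bmi(i:=bi))" using toXi xi yf by blast
            then have "\<pi>0 $ l \<le> \<pi>0 $ k" using xmax Some \<open>x i = Some k\<close> by (force simp: piv_def)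
            moreover have "\<pi>0 $ l \<noteq> \<pi>0 $ k" using perm_inj[OF pi0, of l k] lk by auto
            ultimately have "\<pi>0 $ l < \<pi>0 $ k" by simp
            then show ?thesis using ord deq Some \<open>x i = Some k\<close> by (simp add: piv_def)
          qed
        qed
      qed
    qed
  qed
  show ?thesis
  proof (intro set_eqI iffI)
    fix z assume z: "z \<in> Yset bnd bmi i bs \<pi>1"
    obtain x where x: "x \<in> Yset bnd bmi i bi \<pi>0" using Yset_nonempty[of bnd bmi i bi \<pi>0] by auto
    have xb: "x \<in> Xopt bnd (bmi(i:=bs))" using x Ysub by auto
    have zb: "z \<in> Xopt bnd (bmi(i:=bs))" and zmax: "piv \<pi>1 (x i) \<le> piv \<pi>1 (z i)"
      using z xb by (auto simp: Yset_def)
    have zi: "z i = x i" using key[OF x zb] zmax by linarith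
    have xi: "x \<in> Xopt bnd (bmi(i:=bi))" and xmax: "\<forall>w\<in>Xopt bnd (bmi(i:=bi)). piv \<pi>0 (w i) \<le> piv \<pi>0 (x i)"
      using x by (auto simp: Yset_def)
    have zf: "feasible bnd z" and xf: "feasible bnd x" using zb xb by (auto simp: Xopt_def)
    have a1: "piv bs (z i) + ?R z \<le> piv bs (x i) + ?R x" using xb zf by (simp add: Xopt_upd)
    have a2: "piv bs (x i) + ?R x \<le> piv bs (z i) + ?R z" using zb xf by (simp add: Xopt_upd)
    have "piv bs (z i) + ?R z = piv bs (x i) + ?R x" using a1 a2 by linarith
    then have "?R z = ?R x" using zi by simp
    then have "piv bi (z i) + ?R z = piv bi (x i) + ?R x" using zi by simp
    then have zi': "z \<in> Xopt bnd (bmi(i:=bi))" using toXi xi zf by blast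
    then show "z \<in> Yset bnd bmi i bi \<pi>0" using xmax zi by (auto simp: Yset_def)
  next
    fix x assume x: "x \<in> Yset bnd bmi i bi \<pi>0"
    have xb: "x \<in> Xopt bnd (bmi(i:=bs))" using x Ysub by auto
    have "\<forall>y\<in>Xopt bnd (bmi(i:=bs)). piv \<pi>1 (y i) \<le> piv \<pi>1 (x i)"
      using key[OF x] by force
    then show "x \<in> Yset bnd bmi i bs \<pi>1" using xb by (simp add: Yset_def)
  qed
qed

lemma unif_avg_mono: "(\<And>a. a \<in> A \<Longrightarrow> f a \<le> g a) \<Longrightarrow> unif_avg A f \<le> unif_avg A g"
  unfolding unif_avg_def by (intro divide_right_mono sum_mono) auto

lemma sum_vec_le_eq:
  fixes x y :: "real^'r::finite"
  assumes "\<forall>k. x$k \<le> y$k" "(\<Sum>k\<in>UNIV. y$k) \<le> (\<Sum>k\<in>UNIV. x$k)"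
  shows "x$k = y$k"
proof -
  have "(\<Sum>k\<in>UNIV. y$k - x$k) \<le> 0" using assms(2) by (simp add: sum_subtractf)
  moreover have "(\<Sum>k\<in>UNIV. y$k - x$k) \<ge> 0" using assms(1) by (intro sum_nonneg) auto
  ultimately have "(\<Sum>k\<in>UNIV. y$k - x$k) = 0" by simp
  then have "\<forall>k\<in>UNIV. y$k - x$k = 0" using assms(1) by (subst (asm) sum_nonneg_eq_0_iff) auto
  then show ?thesis by simp
qed

lemma cont_piv: "continuous_on A (\<lambda>b. piv b ob + c)"
  unfolding piv_inner by (rule continuous_on_add[OF continuous_on_inner[OF continuous_on_const continuous_on_id] continuous_on_const])


lemma improve:
  fixes bnd :: "'n::finite \<Rightarrow> 'r::finite \<Rightarrow> 'g set"
    and p :: "'n \<Rightarrow> ('n \<Rightarrow> real^'r) \<Rightarrow> ('n \<Rightarrow> 'r option) \<Rightarrow> real"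
    and D :: "'n \<Rightarrow> (real^'r) pmf"
  assumes nd: "nondecreasing_payment bnd p"
    and finD: "\<And>j. finite (set_pmf (D j))"
    and nnD: "\<And>j. set_pmf (D j) \<subseteq> nonneg_bids"
    and bi: "bi \<in> nonneg_bids"
  shows "\<exists>bs. cell_vertex bnd D i bs \<and> ubar_opt bnd p D i v bi \<le> ubar_opt bnd p D i v bs"
proof -
  define S where "S = set_pmf (others_dist D i)"
  have fin: "finite S" unfolding S_def using finD by (rule supp_finite)
  define U where "U b \<pi> = measure_pmf.expectation (others_dist D i)
      (\<lambda>bmi. unif_avg (Yset bnd bmi i b \<pi>) (\<lambda>x. v (alloc_bundle bnd x i) - p i (bmi(i:=b)) x))" for b \<pi>
  have uo: "ubar_opt bnd p D i v b = Max ((\<lambda>\<pi>. U b \<pi>) ` perm_vectors)" for b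
    unfolding ubar_opt_def U_def using Lim_ubar[OF fin[unfolded S_def], of bnd p v] by simp
  have finP: "finite ((\<lambda>\<pi>. U b \<pi>) ` (perm_vectors :: (real^'r) set))" for b
    by (intro finite_imageI perm_vectors_finite)
  have neP: "(\<lambda>\<pi>. U b \<pi>) ` (perm_vectors :: (real^'r) set) \<noteq> {}" for b
    using perm_vectors_nonempty by auto
  obtain \<pi>0 where pi0: "\<pi>0 \<in> perm_vectors" "U bi \<pi>0 = ubar_opt bnd p D i v bi"
    using Max_in[OF finP neP, of bi] uo[of bi] by auto
  define Yb where "Yb bmi = Yset bnd bmi i bi \<pi>0" for bmi
  define K where "K = {b. (\<forall>k. 0 \<le> b$k \<and> b$k \<le> bi$k) \<and> (\<forall>bmi\<in>S. Yb bmi \<subseteq> Xopt bnd (bmi(i:=b)))}"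
  define C where "C = (\<Inter>bmi\<in>S. \<Inter>y\<in>Yb bmi. \<Inter>z\<in>{z. feasible bnd z}.
      {b. piv b (z i) + rest bmi i z \<le> piv b (y i) + rest bmi i y})"
  have Ybf: "feasible bnd y" if "y \<in> Yb bmi" for y bmi
    using that by (auto simp: Yb_def Yset_def Xopt_def)
  have KC: "K = cbox 0 bi \<inter> C"
  proof (intro set_eqI iffI)
    fix b assume b: "b \<in> K"
    have "b \<in> cbox 0 bi" using b mem_box_cart(2)[of b 0 bi] unfolding K_def by auto
    moreover have "b \<in> C"
    proof -
      have "piv b (z i) + rest bmi i z \<le> piv b (y i) + rest bmi i y"
        if "bmi \<in> S" "y \<in> Yb bmi" "feasible bnd z" for bmi y z
      proof -
        have "y \<in> Xopt bnd (bmi(i:=b))" using b that unfolding K_def by blast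
        then show ?thesis using that(3) by (simp add: Xopt_upd)
      qed
      then show ?thesis unfolding C_def by blast
    qed
    ultimately show "b \<in> cbox 0 bi \<inter> C" by blast
  next
    fix b assume b: "b \<in> cbox 0 bi \<inter> C"
    have "Yb bmi \<subseteq> Xopt bnd (bmi(i:=b))" if "bmi \<in> S" for bmi
    proof
      fix y assume y: "y \<in> Yb bmi"
      then show "y \<in> Xopt bnd (bmi(i:=b))"
        using b that Ybf[OF y] unfolding C_def by (auto simp: Xopt_upd)
    qed
    moreover have "\<forall>k. 0 \<le> b$k \<and> b$k \<le> bi$k" using b mem_box_cart(2)[of b 0 bi] by auto
    ultimately show "b \<in> K" unfolding K_def by auto
  qed
  have "closed C" unfolding C_def
    by (intro closed_INT ballI closed_Collect_le cont_piv)
  then have compK: "compact K" unfolding KC by (intro compact_Int_closed compact_cbox)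
  have biK: "bi \<in> K" using bi unfolding K_def Yb_def Yset_def nonneg_bids_def by auto
  define s where "s b = (\<chi> k. (1::real)) \<bullet> b" for b :: "real^'r"
  have s_eq: "s b = (\<Sum>k\<in>UNIV. b$k)" for b unfolding s_def by (simp add: inner_vec_def)
  have "continuous_on K s" unfolding s_def
    by (rule continuous_on_inner[OF continuous_on_const continuous_on_id])
  then obtain bs where bsK: "bs \<in> K" and bsmin: "\<forall>b\<in>K. s bs \<le> s b"
    using continuous_attains_inf[OF compK _, of s] biK by auto
  have bsnn: "bs \<in> nonneg_bids" using bsK by (auto simp: K_def nonneg_bids_def)
  have bsle: "\<forall>k. bs$k \<le> bi$k" using bsK by (auto simp: K_def)
  have bsY: "Yb bmi \<subseteq> Xopt bnd (bmi(i:=bs))" if "bmi \<in> S" for bmi using bsK that by (auto simp: K_def)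
  obtain ch where cell: "is_cell bnd D i (tset bnd D i ch)" and bsT: "bs \<in> tset bnd D i ch"
    using cell_exists[OF fin[unfolded S_def] bsnn, of bnd] by auto
  have ge: "bs$k \<le> w$k" if wT: "w \<in> tset bnd D i ch"
      and wY: "\<forall>bmi\<in>S. Yb bmi \<subseteq> Xopt bnd (bmi(i:=w))" for w k
  proof -
    define w' where "w' = (\<chi> k. min (w$k) (bs$k))"
    have wnn: "0 \<le> w$k" for k using wT by (auto simp: tset_def nonneg_bids_def)
    have "w' \<in> K"
      unfolding K_def
    proof (intro CollectI conjI allI ballI subsetI)
      fix k show "0 \<le> w' $ k" using wnn[of k] bsnn by (auto simp: w'_def nonneg_bids_def)
      show "w' $ k \<le> bi $ k" using bsle[rule_format, of k] by (auto simp: w'_def)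
    next
      fix bmi y assume "bmi \<in> S" "y \<in> Yb bmi"
      then show "y \<in> Xopt bnd (bmi(i:=w'))"
        unfolding w'_def using wY bsY by (intro vmin_Xopt) auto
    qed
    then have "s bs \<le> s w'" using bsmin by auto
    moreover have "\<forall>k. w'$k \<le> bs$k" by (auto simp: w'_def)
    ultimately have "w'$k = bs$k" using sum_vec_le_eq[of w' bs k] by (simp add: s_eq)
    then show ?thesis by (auto simp: w'_def)
  qed
  have ext: "bs extreme_point_of tset bnd D i ch"
    unfolding extreme_point_of_def
  proof (intro conjI ballI notI)
    show "bs \<in> tset bnd D i ch" by (rule bsT)
    fix a c assume aT: "a \<in> tset bnd D i ch" and cT: "c \<in> tset bnd D i ch"
      and seg: "bs \<in> open_segment a c"
    then obtain u where ac: "a \<noteq> c" and u: "0 < u" "u < 1" and bse: "bs = (1 - u) *\<^sub>R a + u *\<^sub>R c"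
      by (auto simp: in_segment)
    have chX: "ch bmi \<in> Xopt bnd (bmi(i:=b))" if "b \<in> tset bnd D i ch" "bmi \<in> S" for b bmi
      using that by (auto simp: tset_def S_def)
    have aY: "\<forall>bmi\<in>S. Yb bmi \<subseteq> Xopt bnd (bmi(i:=a))"
      using face_step[OF chX[OF aT] chX[OF cT] chX[OF bsT] _ bse u] bsY by blast
    have bse': "bs = (1 - (1 - u)) *\<^sub>R c + (1 - u) *\<^sub>R a" using bse by (simp add: algebra_simps)
    have cY: "\<forall>bmi\<in>S. Yb bmi \<subseteq> Xopt bnd (bmi(i:=c))"
      using face_step[OF chX[OF cT] chX[OF aT] chX[OF bsT] _ bse'] u bsY by force
    have "a$k = c$k" for k
    proof -
      have ga: "bs$k \<le> a$k" using ge[OF aT aY] .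
      have gc: "bs$k \<le> c$k" using ge[OF cT cY] .
      have e: "bs$k = (1-u) * a$k + u * c$k" using bse by simp
      have "(1-u) * (a$k - bs$k) \<ge> 0" using ga u by simp
      moreover have "u * (c$k - bs$k) \<ge> 0" using gc u by simp
      moreover have "(1-u) * (a$k - bs$k) + u * (c$k - bs$k) = 0" using e by (simp add: algebra_simps)
      ultimately have "(1-u) * (a$k - bs$k) = 0" "u * (c$k - bs$k) = 0" by linarith+
      then show ?thesis using u by simp
    qed
    then show False using ac by (simp add: vec_eq_iff)
  qed
  then have vert: "cell_vertex bnd D i bs" unfolding cell_vertex_def using cell by blast
  obtain \<pi>1 where pi1: "\<pi>1 \<in> perm_vectors"
    and ord: "\<forall>k l. ((bi-bs)$l < (bi-bs)$k \<or> ((bi-bs)$l = (bi-bs)$k \<and> \<pi>0$l < \<pi>0$k)) \<longrightarrow> \<pi>1$l < \<pi>1$k"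
    using exists_perm_order[OF pi0(1), of "bi - bs"] by blast
  have "U bi \<pi>0 \<le> U bs \<pi>1"
    unfolding U_def
  proof (rule expectation_mono_pmf[OF fin[unfolded S_def]])
    fix bmi assume bmi: "bmi \<in> set_pmf (others_dist D i)"
    have Yeq: "Yset bnd bmi i bs \<pi>1 = Yset bnd bmi i bi \<pi>0"
      using Yset_transfer[OF _ pi0(1) pi1 bsle ord] bsY[of bmi] bmi by (simp add: Yb_def S_def)
    have nnj: "bmi j \<in> nonneg_bids" if "j \<noteq> i" for j
      using supp_mem[OF bmi that] nnD by auto
    have "p i (bmi(i:=bs)) x \<le> p i (bmi(i:=bi)) x" if x: "x \<in> Yset bnd bmi i bi \<pi>0" for x
    proof -
      have "x \<in> Xopt bnd (bmi(i:=bs))" using x bsY[of bmi] bmi by (auto simp: Yb_def S_def)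
      moreover have "x \<in> Xopt bnd (bmi(i:=bi))" using x by (auto simp: Yset_def)
      moreover have "\<forall>j. (bmi(i:=bs)) j \<in> nonneg_bids" using nnj bsnn by auto
      moreover have "\<forall>j. (bmi(i:=bi)) j \<in> nonneg_bids" using nnj bi by auto
      moreover have "\<forall>j. j \<noteq> i \<longrightarrow> (bmi(i:=bi)) j = (bmi(i:=bs)) j" by auto
      moreover have "\<forall>k. (bmi(i:=bs)) i $ k \<le> (bmi(i:=bi)) i $ k" using bsle by auto
      ultimately show ?thesis
        using nd unfolding nondecreasing_payment_def by blast
    qed
    then show "unif_avg (Yset bnd bmi i bi \<pi>0) (\<lambda>x. v (alloc_bundle bnd x i) - p i (bmi(i := bi)) x)
       \<le> unif_avg (Yset bnd bmi i bs \<pi>1) (\<lambda>x. v (alloc_bundle bnd x i) - p i (bmi(i := bs)) x)"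
      unfolding Yeq by (intro unif_avg_mono) auto
  qed
  also have "U bs \<pi>1 \<le> ubar_opt bnd p D i v bs"
    unfolding uo using finP pi1 by (intro Max_ge) auto
  finally show ?thesis using pi0(2) vert by auto
qed

theorem lemma4:
  fixes bnd :: "'n::finite \<Rightarrow> 'r::finite \<Rightarrow> 'g::finite set"
    and p :: "'n \<Rightarrow> ('n \<Rightarrow> real^'r) \<Rightarrow> ('n \<Rightarrow> 'r option) \<Rightarrow> real"
    and D :: "'n \<Rightarrow> (real^'r) pmf"
    and i :: 'n
    and v :: "'g set \<Rightarrow> real"
  assumes "valid_payment bnd p"
    and "nondecreasing_payment bnd p"
    and "\<And>j. finite (set_pmf (D j))"
    and "\<And>j. set_pmf (D j) \<subseteq> nonneg_bids"
    and "valuation v"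
  shows "\<exists>bstar. cell_vertex bnd D i bstar \<and>
           (\<forall>bi \<in> nonneg_bids. ubar_opt bnd p D i v bstar \<ge> ubar_opt bnd p D i v bi)"
proof -
  let ?V = "{b. cell_vertex bnd D i b}"
  have fin: "finite ?V" using vertices_finite supp_finite assms(3) by blast
  have "0 \<in> nonneg_bids" by (simp add: nonneg_bids_def)
  then have ne: "?V \<noteq> {}" using improve[where bnd=bnd and p=p and D=D and bi=0 and i=i and v=v, OF assms(2-4)] by auto
  obtain bstar where bs: "bstar \<in> ?V" "\<forall>b\<in>?V. ubar_opt bnd p D i v b \<le> ubar_opt bnd p D i v bstar"
    using ex_argmax[OF fin ne, of "ubar_opt bnd p D i v"] by blast
  have "ubar_opt bnd p D i v bi \<le> ubar_opt bnd p D i v bstar" if bi: "bi \<in> nonneg_bids" for bi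
  proof -
    obtain b' where "cell_vertex bnd D i b'" "ubar_opt bnd p D i v bi \<le> ubar_opt bnd p D i v b'"
      using improve[where bnd=bnd and p=p and D=D and bi=bi and i=i and v=v, OF assms(2-4) bi] by blast
    then show ?thesis using bs by force
  qed
  then show ?thesis using bs by auto
qed

end
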